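(* Let $\{\omega_n\}_{n\ge1}$ be a KP integrable system of differentials on $\Sigma$ with kernel $K$. Let $m,n\ge1$ and let $$Z=(p_1,\dots,p_m,\bar p_1,\dots,\bar p_{m-1},p'_1,\dots,p'_{n-1},\bar p'_1,\dots,\bar p'_n)$$ be a collection of $2m+2n-2$ pairwise distinct points of $\Sigma$ at which $K$ is regular (away from the diagonal). Then $$\sum_{q\in Z}\operatorname*{res}_{z=q}\ \Omega^\bullet_m(p_1,\dots,p_m;\bar p_1,\dots,\bar p_{m-1},z)\,\Omega^\bullet_n(p'_1,\dots,p'_{n-1},z;\bar p'_1,\dots,\bar p'_n)=0 .$$
   Context: Let $\Sigma$ be a (not necessarily compact) Riemann surface. A system $\{\omega_n\}_{n\ge1}$ of symmetric meromorphic $n$-differentials on $\Sigma$ (or formal power series in a parameter $\hbar$ whose coefficients are such) is called KP integrable if there is a bi-halfdifferential $K(p_1,p_2)$ on $\Sigma^2$ (a section of a square root of the canonical bundle in each argument; meromorphic, or an $\hbar$-series with meromorphic coefficients) which near the diagonal has the form $K(p_1,p_2)=\big(\frac{1}{z_1-z_2}+\text{holomorphic}\big)\sqrt{dz_1}\sqrt{dz_2}$, $z_i=z(p_i)$, for a local coordinate $z$, such that $\omega_1(p_1)=\lim_{p_2\to p_1}\big(K(p_1,p_2)-\frac{\sqrt{dz_1}\sqrt{dz_2}}{z_1-z_2}\big)$ and $\omega_n(p_1,\dots,p_n)=\det^\circ\|K(p_i,p_j)\|_{i,j=1}^n$ for $n\ge2$. Here for an $n\times n$ matrix, the connected determinant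 is $\det^\circ(A_{ij})=(-1)^{n-1}\sum_{\sigma}\prod_{i=1}^nA_{i,\sigma(i)}$, the sum over all permutations $\sigma\in\mathfrak S_n$ that are cycles of length $n$. For such a system and $N\ge1$ we write $\Omega^\bullet_N(p^+_1,\dots,p^+_N;p^-_1,\dots,p^-_N)=\det\|K(p^+_i,p^-_j)\|_{i,j=1}^N$ (the arguments before the semicolon are the $p^+$'s, those after it the $p^-$'s). The product under the residue is a meromorphic $1$-differential in $z$. *)

theory Defs
  imports "HOL-Complex_Analysis.Complex_Analysis"
          "HOL-Computational_Algebra.Formal_Power_Series"
begin

type_synonym 'p chart = "'p set \<times> ('p \<Rightarrow> complex)"

definition is_chart :: "'p::topological_space chart \<Rightarrow> bool" where
  "is_chart c \<longleftrightarrow> open (fst c) \<and> open (snd c ` fst c) \<and>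
     homeomorphism (fst c) (snd c ` fst c) (snd c) (inv_into (fst c) (snd c))"

definition transition :: "'p chart \<Rightarrow> 'p chart \<Rightarrow> complex \<Rightarrow> complex" where
  "transition c d = snd d \<circ> inv_into (fst c) (snd c)"

definition riemann_surface_atlas :: "'p::t2_space chart set \<Rightarrow> bool" where
  "riemann_surface_atlas A \<longleftrightarrow>
     connected (UNIV :: 'p set) \<and>
     (\<forall>c\<in>A. is_chart c) \<and> (\<Union>c\<in>A. fst c) = UNIV \<and>
     (\<forall>c\<in>A. \<forall>d\<in>A. transition c d holomorphic_on (snd c ` (fst c \<inter> fst d)))"

text \<open>A square root of the canonical bundle, trivialised over the charts of A:
  s c d p = sqrt(d z_d / d z_c) at p, a continuous choice of square roots of the
  derivatives of the transition maps satisfying the cocycle condition.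
  A local expression f_c of a half-differential (f_c(z_c) sqrt(dz_c)) transforms as
  f_c = s c d * f_d.\<close>
definition spin_structure :: "'p::t2_space chart set \<Rightarrow> ('p chart \<Rightarrow> 'p chart \<Rightarrow> 'p \<Rightarrow> complex) \<Rightarrow> bool" where
  "spin_structure A s \<longleftrightarrow>
     (\<forall>c\<in>A. \<forall>d\<in>A. continuous_on (fst c \<inter> fst d) (s c d) \<and>
        (\<forall>p\<in>fst c \<inter> fst d. (s c d p)\<^sup>2 = deriv (transition c d) (snd c p))) \<and>
     (\<forall>c\<in>A. \<forall>d\<in>A. \<forall>e\<in>A. \<forall>p\<in>fst c \<inter> fst d \<inter> fst e. s c e p = s c d p * s d e p)"

definition holo2 :: "(complex \<Rightarrow> complex \<Rightarrow> complex) \<Rightarrow> (complex \<times> complex) set \<Rightarrow> bool" where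
  "holo2 f W \<longleftrightarrow> open W \<and> continuous_on W (\<lambda>(x, y). f x y) \<and>
     (\<forall>(x, y)\<in>W. (\<lambda>x'. f x' y) field_differentiable at x \<and>
                  (\<lambda>y'. f x y') field_differentiable at y)"

definition regular2_at :: "(complex \<Rightarrow> complex \<Rightarrow> complex) \<Rightarrow> complex \<times> complex \<Rightarrow> bool" where
  "regular2_at f z \<longleftrightarrow> (\<exists>W. z \<in> W \<and> holo2 f W)"

definition mero2 :: "(complex \<Rightarrow> complex \<Rightarrow> complex) \<Rightarrow> (complex \<times> complex) set \<Rightarrow> bool" where
  "mero2 f S \<longleftrightarrow> open S \<and>
     (\<forall>z\<in>S. \<exists>W g h. z \<in> W \<and> W \<subseteq> S \<and> holo2 g W \<and> holo2 h W \<and>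
        (\<forall>w\<in>W. \<forall>e>0. \<exists>w'\<in>ball w e. h (fst w') (snd w') \<noteq> 0) \<and>
        (\<forall>(x, y)\<in>W. h x y \<noteq> 0 \<longrightarrow> f x y = g x y / h x y))"

text \<open>A bi-halfdifferential on the surface, given by its local expressions
  K c d z1 z2 in pairs of charts (c for the first, d for the second argument).
  Values are formal power series in hbar (fps_nth _ k is the coefficient of hbar^k);
  the purely meromorphic case is the case of constant series.\<close>
definition KP_kernel :: "'p::t2_space chart set \<Rightarrow> ('p chart \<Rightarrow> 'p chart \<Rightarrow> 'p \<Rightarrow> complex)
     \<Rightarrow> ('p chart \<Rightarrow> 'p chart \<Rightarrow> complex \<Rightarrow> complex \<Rightarrow> complex fps) \<Rightarrow> bool" where
  "KP_kernel A s K \<longleftrightarrow>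
     (\<forall>c\<in>A. \<forall>d\<in>A. \<forall>k. mero2 (\<lambda>w1 w2. fps_nth (K c d w1 w2) k) (snd c ` fst c \<times> snd d ` fst d)) \<and>
     (\<forall>c\<in>A. \<forall>c'\<in>A. \<forall>d\<in>A. \<forall>d'\<in>A. \<forall>p1\<in>fst c \<inter> fst c'. \<forall>p2\<in>fst d \<inter> fst d'.
        K c d (snd c p1) (snd d p2) = fps_const (s c c' p1 * s d d' p2) * K c' d' (snd c' p1) (snd d' p2)) \<and>
     (\<forall>c\<in>A. \<forall>p\<in>fst c. \<forall>k. \<exists>W h. (snd c p, snd c p) \<in> W \<and> holo2 h W \<and>
        (\<forall>(w1, w2)\<in>W. w1 \<noteq> w2 \<longrightarrow>
           fps_nth (K c c w1 w2) k = (if k = 0 then 1 / (w1 - w2) else 0) + h w1 w2))"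

definition detN :: "nat \<Rightarrow> (nat \<Rightarrow> nat \<Rightarrow> 'a::comm_ring_1) \<Rightarrow> 'a" where
  "detN N M = (\<Sum>\<sigma> | \<sigma> permutes {..<N}. of_int (sign \<sigma>) * (\<Prod>i<N. M i (\<sigma> i)))"

text \<open>Local expression of Omega^bullet_N(P_1..P_N; M_1..M_N) = det K(P_i, M_j), where
  every argument is given as (chart, coordinate of the point in that chart).\<close>
definition Omega_loc :: "('p chart \<Rightarrow> 'p chart \<Rightarrow> complex \<Rightarrow> complex \<Rightarrow> complex fps) \<Rightarrow> nat
     \<Rightarrow> (nat \<Rightarrow> 'p chart \<times> complex) \<Rightarrow> (nat \<Rightarrow> 'p chart \<times> complex) \<Rightarrow> complex fps" where
  "Omega_loc K N P M = detN N (\<lambda>i j. K (fst (P i)) (fst (M j)) (snd (P i)) (snd (M j)))"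

definition at_pt :: "('p \<Rightarrow> 'p chart) \<Rightarrow> 'p \<Rightarrow> 'p chart \<times> complex" where
  "at_pt ch p = (ch p, snd (ch p) p)"

definition fps_residue :: "(complex \<Rightarrow> complex fps) \<Rightarrow> complex \<Rightarrow> complex fps" where
  "fps_residue F z = Abs_fps (\<lambda>k. residue (\<lambda>w. fps_nth (F w) k) z)"

end

theory Submission imports Defs begin

definition hh :: "(complex \<Rightarrow> complex fps) \<Rightarrow> complex \<Rightarrow> bool" where
  "hh F a \<longleftrightarrow> (\<forall>k. (\<lambda>w. F w $ k) analytic_on {a})"

definition pp :: "(complex \<Rightarrow> complex fps) \<Rightarrow> complex \<Rightarrow> complex fps \<Rightarrow> bool" where
  "pp F a C \<longleftrightarrow> (\<forall>k. \<exists>g. g analytic_on {a} \<and>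
      eventually (\<lambda>w. F w $ k = C $ k / (w - a) + g w) (at a))"

lemma hh_pp: "hh F a \<Longrightarrow> pp F a 0"
  unfolding hh_def pp_def by (auto intro!: always_eventually)

lemma hh_const: "hh (\<lambda>w. c) a"
  unfolding hh_def by simp

lemma hh_add: "hh F a \<Longrightarrow> hh G a \<Longrightarrow> hh (\<lambda>w. F w + G w) a"
  unfolding hh_def by (auto intro: analytic_on_add)

lemma hh_mult: "hh F a \<Longrightarrow> hh G a \<Longrightarrow> hh (\<lambda>w. F w * G w) a"
  unfolding hh_def fps_mult_nth by (auto intro!: analytic_on_sum analytic_on_mult)

lemma hh_sum: "(\<And>i. i \<in> I \<Longrightarrow> hh (F i) a) \<Longrightarrow> hh (\<lambda>w. \<Sum>i\<in>I. F i w) a"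
  unfolding hh_def fps_sum_nth by (auto intro!: analytic_on_sum)

lemma pp_add: "pp F a C \<Longrightarrow> pp G a D \<Longrightarrow> pp (\<lambda>w. F w + G w) a (C + D)"
  unfolding pp_def
proof (intro allI)
  fix k assume F: "\<forall>k. \<exists>g. g analytic_on {a} \<and> (\<forall>\<^sub>F w in at a. F w $ k = C $ k / (w - a) + g w)"
    and G: "\<forall>k. \<exists>g. g analytic_on {a} \<and> (\<forall>\<^sub>F w in at a. G w $ k = D $ k / (w - a) + g w)"
  obtain g1 where g1: "g1 analytic_on {a}" "\<forall>\<^sub>F w in at a. F w $ k = C $ k / (w - a) + g1 w" using F by blast
  obtain g2 where g2: "g2 analytic_on {a}" "\<forall>\<^sub>F w in at a. G w $ k = D $ k / (w - a) + g2 w" using G by blast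
  show "\<exists>g. g analytic_on {a} \<and> (\<forall>\<^sub>F w in at a. (F w + G w) $ k = (C + D) $ k / (w - a) + g w)"
    apply (rule exI[of _ "\<lambda>w. g1 w + g2 w"])
    using g1 g2 by (auto intro: analytic_on_add elim: eventually_elim2 simp: add_divide_distrib)
qed

lemma pp_zero: "pp (\<lambda>w. 0) a 0"
  unfolding pp_def by (auto intro!: exI[of _ "\<lambda>w. 0"])

lemma pp_sum: "finite I \<Longrightarrow> (\<And>i. i \<in> I \<Longrightarrow> pp (F i) a (C i)) \<Longrightarrow> pp (\<lambda>w. \<Sum>i\<in>I. F i w) a (\<Sum>i\<in>I. C i)"
  by (induction I rule: finite_induct) (auto intro: pp_add pp_zero)

lemma res_pp: assumes "pp F a C" shows "fps_residue F a = C"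
proof -
  have "residue (\<lambda>w. F w $ k) a = C $ k" for k
  proof -
    obtain g where g: "g analytic_on {a}" "\<forall>\<^sub>F w in at a. F w $ k = C $ k / (w - a) + g w"
      using assms unfolding pp_def by blast
    obtain e where e: "e > 0" "g holomorphic_on ball a e" using g(1) unfolding analytic_on_def by auto
    have "residue (\<lambda>w. F w $ k) a = residue (\<lambda>w. C $ k / (w - a) + g w) a"
      by (rule residue_cong[OF g(2) refl])
    also have "\<dots> = residue (\<lambda>w. C $ k / (w - a)) a + residue g a"
      by (rule residue_add[of "ball a e"]) (use e in \<open>auto intro!: holomorphic_intros elim: holomorphic_on_subset\<close>)
    also have "residue (\<lambda>w. C $ k / (w - a)) a = C $ k"
      using residue_simple[of UNIV a "\<lambda>w. C $ k"] by simp
    also have "residue g a = 0" using residue_holo[of "ball a e" a g] e by simp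
    finally show ?thesis by simp
  qed
  then show ?thesis unfolding fps_residue_def by (simp add: fps_eq_iff)
qed

lemma pp_mult_hh: assumes F: "pp F a C" and G: "hh G a"
  shows "pp (\<lambda>w. F w * G w) a (C * G a)"
  unfolding pp_def
proof
  fix k
  have "\<forall>l. \<exists>g. g analytic_on {a} \<and> (\<forall>\<^sub>F w in at a. F w $ l = C $ l / (w - a) + g w)"
    using F unfolding pp_def by blast
  then obtain gs where gs: "\<And>l. gs l analytic_on {a}"
     "\<And>l. \<forall>\<^sub>F w in at a. F w $ l = C $ l / (w - a) + gs l w"
    by metis
  define d where "d l = (\<lambda>w. if w = a then deriv (\<lambda>w. G w $ l) a else (G w $ l - G a $ l) / (w - a))" for l
  have d: "d l analytic_on {a}" for l
  proof -
    obtain e where e: "e > 0" "(\<lambda>w. G w $ l) holomorphic_on ball a e"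
      using G unfolding hh_def analytic_on_def by blast
    have "d l holomorphic_on ball a e" unfolding d_def
      by (rule pole_lemma_open[OF e(2)]) auto
    then show ?thesis using e(1) unfolding analytic_on_def by auto
  qed
  have ev: "\<forall>\<^sub>F w in at a. \<forall>l\<in>{0..k}. F w $ l = C $ l / (w - a) + gs l w"
    by (rule eventually_ball_finite) (use gs(2) in auto)
  show "\<exists>g. g analytic_on {a} \<and> (\<forall>\<^sub>F w in at a. (F w * G w) $ k = (C * G a) $ k / (w - a) + g w)"
  proof (intro exI conjI)
    show "(\<lambda>w. \<Sum>l=0..k. C $ l * d (k - l) w + gs l w * G w $ (k - l)) analytic_on {a}"
      using d gs(1) G unfolding hh_def by (auto intro!: analytic_on_sum analytic_on_mult analytic_on_add)
    show "\<forall>\<^sub>F w in at a. (F w * G w) $ k = (C * G a) $ k / (w - a) + (\<Sum>l=0..k. C $ l * d (k - l) w + gs l w * G w $ (k - l))"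
      using ev eventually_neq_at_within[of a a UNIV]
    proof eventually_elim
      case (elim w)
      then have wa: "w \<noteq> a" by auto
      have *: "F w $ l * G w $ (k - l) = C $ l * G a $ (k - l) / (w - a) + (C $ l * d (k - l) w + gs l w * G w $ (k - l))"
        if "l \<in> {0..k}" for l
      proof -
        have Gw: "G w $ (k - l) = G a $ (k - l) + (w - a) * d (k - l) w"
          using wa unfolding d_def by (simp add: field_simps)
        have Fl: "F w $ l = C $ l / (w - a) + gs l w" using elim that by auto
        have "w - a \<noteq> 0" using wa by auto
        then show ?thesis unfolding Fl Gw by (simp add: field_simps)
      qed
      show ?case unfolding fps_mult_nth
        by (simp add: * sum.distrib sum_divide_distrib)
    qed
  qed
qed

definition rowcof :: "nat \<Rightarrow> (nat \<Rightarrow> nat \<Rightarrow> 'a::comm_ring_1) \<Rightarrow> nat \<Rightarrow> 'a" where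
  "rowcof N M j0 = (\<Sum>\<sigma> | \<sigma> permutes {..<N} \<and> \<sigma> (N - 1) = j0.
       of_int (sign \<sigma>) * (\<Prod>i\<in>{..<N} - {N - 1}. M i (\<sigma> i)))"

definition colcof :: "nat \<Rightarrow> (nat \<Rightarrow> nat \<Rightarrow> 'a::comm_ring_1) \<Rightarrow> nat \<Rightarrow> 'a" where
  "colcof N M i0 = (\<Sum>\<sigma> | \<sigma> permutes {..<N} \<and> \<sigma> i0 = N - 1.
       of_int (sign \<sigma>) * (\<Prod>i\<in>{..<N} - {i0}. M i (\<sigma> i)))"

lemma detN_row: assumes "N \<ge> 1"
  shows "detN N M = (\<Sum>j0<N. M (N - 1) j0 * rowcof N M j0)"
proof -
  let ?S = "{\<sigma>. \<sigma> permutes {..<N}}"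
  let ?f = "\<lambda>\<sigma>. of_int (sign \<sigma>) * (\<Prod>i<N. M i (\<sigma> i))"
  have fin: "finite ?S" by (simp add: finite_permutations)
  have img: "(\<lambda>\<sigma>. \<sigma> (N - 1)) ` ?S \<subseteq> {..<N}"
    using assms by (auto dest: permutes_in_image[where x="N - 1"])
  have "detN N M = sum ?f ?S" unfolding detN_def by simp
  also have "\<dots> = (\<Sum>j0<N. sum ?f {\<sigma>. \<sigma> \<in> ?S \<and> \<sigma> (N - 1) = j0})"
    by (rule sum.group[OF fin _ img, symmetric]) simp
  also have "\<dots> = (\<Sum>j0<N. M (N - 1) j0 * rowcof N M j0)"
  proof (rule sum.cong[OF refl])
    fix j0 assume "j0 \<in> {..<N}"
    have "sum ?f {\<sigma>. \<sigma> \<in> ?S \<and> \<sigma> (N - 1) = j0} =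
       (\<Sum>\<sigma> | \<sigma> permutes {..<N} \<and> \<sigma> (N - 1) = j0. M (N - 1) j0 *
          (of_int (sign \<sigma>) * (\<Prod>i\<in>{..<N} - {N - 1}. M i (\<sigma> i))))"
    proof (rule sum.cong)
      fix \<sigma> assume "\<sigma> \<in> {\<sigma>. \<sigma> permutes {..<N} \<and> \<sigma> (N - 1) = j0}"
      then have s: "\<sigma> (N - 1) = j0" by auto
      have "(\<Prod>i<N. M i (\<sigma> i)) = M (N - 1) (\<sigma> (N - 1)) * (\<Prod>i\<in>{..<N} - {N - 1}. M i (\<sigma> i))"
        by (rule prod.remove) (use assms in auto)
      then show "?f \<sigma> = M (N - 1) j0 * (of_int (sign \<sigma>) * (\<Prod>i\<in>{..<N} - {N - 1}. M i (\<sigma> i)))"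
        using s by (simp add: algebra_simps)
    qed auto
    then show "sum ?f {\<sigma>. \<sigma> \<in> ?S \<and> \<sigma> (N - 1) = j0} = M (N - 1) j0 * rowcof N M j0"
      unfolding rowcof_def by (simp add: sum_distrib_left)
  qed
  finally show ?thesis .
qed

lemma detN_col: assumes "N \<ge> 1"
  shows "detN N M = (\<Sum>i0<N. M i0 (N - 1) * colcof N M i0)"
proof -
  let ?S = "{\<sigma>. \<sigma> permutes {..<N}}"
  let ?f = "\<lambda>\<sigma>. of_int (sign \<sigma>) * (\<Prod>i<N. M i (\<sigma> i))"
  have fin: "finite ?S" by (simp add: finite_permutations)
  have img: "(\<lambda>\<sigma>. inv \<sigma> (N - 1)) ` ?S \<subseteq> {..<N}"
  proof (rule image_subsetI)
    fix \<sigma> assume "\<sigma> \<in> ?S"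
    then have p: "\<sigma> permutes {..<N}" by simp
    show "inv \<sigma> (N - 1) \<in> {..<N}"
      using permutes_in_image[OF permutes_inv[OF p], of "N - 1"] assms by simp
  qed
  have "detN N M = sum ?f ?S" unfolding detN_def by simp
  also have "\<dots> = (\<Sum>i0<N. sum ?f {\<sigma>. \<sigma> \<in> ?S \<and> inv \<sigma> (N - 1) = i0})"
    by (rule sum.group[OF fin _ img, symmetric]) simp
  also have "\<dots> = (\<Sum>i0<N. M i0 (N - 1) * colcof N M i0)"
  proof (rule sum.cong[OF refl])
    fix i0 assume i0: "i0 \<in> {..<N}"
    have eqs: "{\<sigma>. \<sigma> \<in> ?S \<and> inv \<sigma> (N - 1) = i0} = {\<sigma>. \<sigma> permutes {..<N} \<and> \<sigma> i0 = N - 1}"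
    proof -
      have "inv \<sigma> (N - 1) = i0 \<longleftrightarrow> \<sigma> i0 = N - 1" if p: "\<sigma> permutes {..<N}" for \<sigma>
        using permutes_inverses[OF p] by metis
      then show ?thesis by blast
    qed
    have "sum ?f {\<sigma>. \<sigma> permutes {..<N} \<and> \<sigma> i0 = N - 1} =
       (\<Sum>\<sigma> | \<sigma> permutes {..<N} \<and> \<sigma> i0 = N - 1. M i0 (N - 1) *
          (of_int (sign \<sigma>) * (\<Prod>i\<in>{..<N} - {i0}. M i (\<sigma> i))))"
    proof (rule sum.cong)
      fix \<sigma> assume "\<sigma> \<in> {\<sigma>. \<sigma> permutes {..<N} \<and> \<sigma> i0 = N - 1}"
      then have s: "\<sigma> i0 = N - 1" by auto
      have "(\<Prod>i<N. M i (\<sigma> i)) = M i0 (\<sigma> i0) * (\<Prod>i\<in>{..<N} - {i0}. M i (\<sigma> i))"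
        by (rule prod.remove) (use i0 in auto)
      then show "?f \<sigma> = M i0 (N - 1) * (of_int (sign \<sigma>) * (\<Prod>i\<in>{..<N} - {i0}. M i (\<sigma> i)))"
        using s by (simp add: algebra_simps)
    qed auto
    then show "sum ?f {\<sigma>. \<sigma> \<in> ?S \<and> inv \<sigma> (N - 1) = i0} = M i0 (N - 1) * colcof N M i0"
      unfolding colcof_def eqs by (simp add: sum_distrib_left)
  qed
  finally show ?thesis .
qed

lemma rowcof_cong: assumes "\<And>i j. i < N \<Longrightarrow> j < N \<Longrightarrow> i \<noteq> N - 1 \<Longrightarrow> M i j = M' i j"
  shows "rowcof N M j0 = rowcof N M' j0"
  unfolding rowcof_def
proof (rule sum.cong[OF refl])
  fix \<sigma> assume s: "\<sigma> \<in> {\<sigma>. \<sigma> permutes {..<N} \<and> \<sigma> (N - 1) = j0}"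
  have "(\<Prod>i\<in>{..<N} - {N - 1}. M i (\<sigma> i)) = (\<Prod>i\<in>{..<N} - {N - 1}. M' i (\<sigma> i))"
  proof (rule prod.cong[OF refl])
    fix i assume i: "i \<in> {..<N} - {N - 1}"
    have "\<sigma> i < N" using s i permutes_in_image[of \<sigma> "{..<N}" i] by auto
    then show "M i (\<sigma> i) = M' i (\<sigma> i)" using i by (auto intro!: assms)
  qed
  then show "of_int (sign \<sigma>) * (\<Prod>i\<in>{..<N} - {N - 1}. M i (\<sigma> i)) =
    of_int (sign \<sigma>) * (\<Prod>i\<in>{..<N} - {N - 1}. M' i (\<sigma> i))" by simp
qed

lemma colcof_cong: assumes "\<And>i j. i < N \<Longrightarrow> j < N \<Longrightarrow> j \<noteq> N - 1 \<Longrightarrow> M i j = M' i j"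
  shows "colcof N M i0 = colcof N M' i0"
  unfolding colcof_def
proof (rule sum.cong[OF refl])
  fix \<sigma> assume s: "\<sigma> \<in> {\<sigma>. \<sigma> permutes {..<N} \<and> \<sigma> i0 = N - 1}"
  have "(\<Prod>i\<in>{..<N} - {i0}. M i (\<sigma> i)) = (\<Prod>i\<in>{..<N} - {i0}. M' i (\<sigma> i))"
  proof (rule prod.cong[OF refl])
    fix i assume i: "i \<in> {..<N} - {i0}"
    have "\<sigma> i < N" using s i permutes_in_image[of \<sigma> "{..<N}" i] by auto
    moreover have "\<sigma> i \<noteq> \<sigma> i0" proof
      assume "\<sigma> i = \<sigma> i0"
      moreover have "inj \<sigma>" using s permutes_inj[of \<sigma> "{..<N}"] by simp
      ultimately have "i = i0" by (metis injD)
      then show False using i by simp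
    qed
    ultimately show "M i (\<sigma> i) = M' i (\<sigma> i)" using i s by (auto intro!: assms)
  qed
  then show "of_int (sign \<sigma>) * (\<Prod>i\<in>{..<N} - {i0}. M i (\<sigma> i)) =
    of_int (sign \<sigma>) * (\<Prod>i\<in>{..<N} - {i0}. M' i (\<sigma> i))" by simp
qed

lemma holo2_an2: assumes "holo2 f W" "(x, y) \<in> W" shows "(\<lambda>w. f x w) analytic_on {y}"
proof -
  from assms obtain e where e: "e > 0" "ball (x, y) e \<subseteq> W" unfolding holo2_def by (meson openE)
  have "(\<lambda>w. f x w) holomorphic_on ball y e"
  proof (rule holomorphic_on_open[THEN iffD2])
    show "\<forall>w\<in>ball y e. \<exists>f'. ((\<lambda>w. f x w) has_field_derivative f') (at w)"
    proof
      fix w assume w: "w \<in> ball y e"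
      then have "(x, w) \<in> W" using e(2) by (auto simp: dist_Pair_Pair dist_commute)
      then have "(\<lambda>y'. f x y') field_differentiable at w" using assms(1) unfolding holo2_def by auto
      then show "\<exists>f'. ((\<lambda>w. f x w) has_field_derivative f') (at w)" unfolding field_differentiable_def by auto
    qed
  qed auto
  then show ?thesis using e(1) unfolding analytic_on_def by auto
qed

lemma holo2_an1: assumes "holo2 f W" "(x, y) \<in> W" shows "(\<lambda>w. f w y) analytic_on {x}"
proof -
  from assms obtain e where e: "e > 0" "ball (x, y) e \<subseteq> W" unfolding holo2_def by (meson openE)
  have "(\<lambda>w. f w y) holomorphic_on ball x e"
  proof (rule holomorphic_on_open[THEN iffD2])
    show "\<forall>w\<in>ball x e. \<exists>f'. ((\<lambda>w. f w y) has_field_derivative f') (at w)"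
    proof
      fix w assume w: "w \<in> ball x e"
      then have "(w, y) \<in> W" using e(2) by (auto simp: dist_Pair_Pair dist_commute)
      then have "(\<lambda>x'. f x' y) field_differentiable at w" using assms(1) unfolding holo2_def by auto
      then show "\<exists>f'. ((\<lambda>w. f w y) has_field_derivative f') (at w)" unfolding field_differentiable_def by auto
    qed
  qed auto
  then show ?thesis using e(1) unfolding analytic_on_def by auto
qed

lemma reg_hh2: fixes F :: "complex \<Rightarrow> complex \<Rightarrow> complex fps" assumes "\<forall>k. regular2_at (\<lambda>w1 w2. F w1 w2 $ k) (x, y)" shows "hh (\<lambda>w. F x w) y"
  unfolding hh_def
proof
  fix k
  obtain W where "(x, y) \<in> W" "holo2 (\<lambda>w1 w2. F w1 w2 $ k) W" using assms unfolding regular2_at_def by blast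
  from holo2_an2[OF this(2,1)] show "(\<lambda>w. F x w $ k) analytic_on {y}" .
qed

lemma reg_hh1: fixes F :: "complex \<Rightarrow> complex \<Rightarrow> complex fps" assumes "\<forall>k. regular2_at (\<lambda>w1 w2. F w1 w2 $ k) (x, y)" shows "hh (\<lambda>w. F w y) x"
  unfolding hh_def
proof
  fix k
  obtain W where "(x, y) \<in> W" "holo2 (\<lambda>w1 w2. F w1 w2 $ k) W" using assms unfolding regular2_at_def by blast
  from holo2_an1[OF this(2,1)] show "(\<lambda>w. F w y $ k) analytic_on {x}" .
qed

lemma diag_pp: fixes F :: "complex \<Rightarrow> complex \<Rightarrow> complex fps"
  assumes "\<forall>k. \<exists>W h. (a, a) \<in> W \<and> holo2 h W \<and>
        (\<forall>(w1, w2)\<in>W. w1 \<noteq> w2 \<longrightarrow> F w1 w2 $ k = (if k = 0 then 1 / (w1 - w2) else 0) + h w1 w2)"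
  shows "pp (\<lambda>w. F a w) a (-1)" "pp (\<lambda>w. F w a) a 1"
  unfolding pp_def
proof -
  show "\<forall>k. \<exists>g. g analytic_on {a} \<and> (\<forall>\<^sub>F w in at a. F a w $ k = (-1) $ k / (w - a) + g w)"
  proof
    fix k
    obtain W h where Wh: "(a, a) \<in> W" "holo2 h W"
      "\<forall>(w1, w2)\<in>W. w1 \<noteq> w2 \<longrightarrow> F w1 w2 $ k = (if k = 0 then 1 / (w1 - w2) else 0) + h w1 w2"
      using assms by blast
    from Wh obtain e where e: "e > 0" "ball (a, a) e \<subseteq> W" unfolding holo2_def by (meson openE)
    show "\<exists>g. g analytic_on {a} \<and> (\<forall>\<^sub>F w in at a. F a w $ k = (-1) $ k / (w - a) + g w)"
    proof (intro exI conjI)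
      show "(\<lambda>w. h a w) analytic_on {a}" by (rule holo2_an2[OF Wh(2,1)])
      show "\<forall>\<^sub>F w in at a. F a w $ k = (-1) $ k / (w - a) + h a w"
        unfolding eventually_at
      proof (intro exI[of _ e] conjI ballI impI)
        fix w assume w: "w \<in> UNIV" "w \<noteq> a \<and> dist w a < e"
        then have "(a, w) \<in> W" using e(2) by (auto simp: dist_Pair_Pair dist_commute)
        then have "F a w $ k = (if k = 0 then 1 / (a - w) else 0) + h a w" using Wh(3) w by auto
        moreover have "1 / (a - w) = -1 / (w - a)"
        proof -
          have "a - w = - (w - a)" by simp
          then show ?thesis by (simp only: divide_minus_right) simp
        qed
        ultimately show "F a w $ k = (-1) $ k / (w - a) + h a w" by auto
      qed (use e in auto)
    qed
  qed
  show "\<forall>k. \<exists>g. g analytic_on {a} \<and> (\<forall>\<^sub>F w in at a. F w a $ k = 1 $ k / (w - a) + g w)"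
  proof
    fix k
    obtain W h where Wh: "(a, a) \<in> W" "holo2 h W"
      "\<forall>(w1, w2)\<in>W. w1 \<noteq> w2 \<longrightarrow> F w1 w2 $ k = (if k = 0 then 1 / (w1 - w2) else 0) + h w1 w2"
      using assms by blast
    from Wh obtain e where e: "e > 0" "ball (a, a) e \<subseteq> W" unfolding holo2_def by (meson openE)
    show "\<exists>g. g analytic_on {a} \<and> (\<forall>\<^sub>F w in at a. F w a $ k = 1 $ k / (w - a) + g w)"
    proof (intro exI conjI)
      show "(\<lambda>w. h w a) analytic_on {a}" by (rule holo2_an1[OF Wh(2,1)])
      show "\<forall>\<^sub>F w in at a. F w a $ k = 1 $ k / (w - a) + h w a"
        unfolding eventually_at
      proof (intro exI[of _ e] conjI ballI impI)
        fix w assume w: "w \<in> UNIV" "w \<noteq> a \<and> dist w a < e"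
        then have "(w, a) \<in> W" using e(2) by (auto simp: dist_Pair_Pair dist_commute)
        then have "F w a $ k = (if k = 0 then 1 / (w - a) else 0) + h w a" using Wh(3) w by auto
        then show "F w a $ k = 1 $ k / (w - a) + h w a" by auto
      qed (use e in auto)
    qed
  qed
qed

theorem mainTheorem1:
  fixes A :: "'p::t2_space chart set"
    and s :: "'p chart \<Rightarrow> 'p chart \<Rightarrow> 'p \<Rightarrow> complex"
    and K :: "'p chart \<Rightarrow> 'p chart \<Rightarrow> complex \<Rightarrow> complex \<Rightarrow> complex fps"
    and ch :: "'p \<Rightarrow> 'p chart"
    and m n :: nat
    and P Pb P' Pb' :: "nat \<Rightarrow> 'p"
  assumes RS: "riemann_surface_atlas A"
    and spin: "spin_structure A s"
    and kernel: "KP_kernel A s K"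
    and charts: "\<forall>p. ch p \<in> A \<and> p \<in> fst (ch p)"
    and m: "m \<ge> 1" and n: "n \<ge> 1"
    and dist: "distinct (map P [0..<m] @ map Pb [0..<m-1] @ map P' [0..<n-1] @ map Pb' [0..<n])"
    and reg: "\<forall>q\<in>set (map P [0..<m] @ map Pb [0..<m-1] @ map P' [0..<n-1] @ map Pb' [0..<n]).
               \<forall>q'\<in>set (map P [0..<m] @ map Pb [0..<m-1] @ map P' [0..<n-1] @ map Pb' [0..<n]).
               q \<noteq> q' \<longrightarrow> (\<forall>k. regular2_at (\<lambda>w1 w2. fps_nth (K (ch q) (ch q') w1 w2) k)
                                         (snd (ch q) q, snd (ch q') q'))"
  shows "(\<Sum>q\<in>set (map P [0..<m] @ map Pb [0..<m-1] @ map P' [0..<n-1] @ map Pb' [0..<n]).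
           fps_residue
             (\<lambda>w. Omega_loc K m (\<lambda>i. at_pt ch (P i))
                                 (\<lambda>j. if j < m - 1 then at_pt ch (Pb j) else (ch q, w))
                * Omega_loc K n (\<lambda>i. if i < n - 1 then at_pt ch (P' i) else (ch q, w))
                                 (\<lambda>j. at_pt ch (Pb' j)))
             (snd (ch q) q)) = 0"
proof -
  define crd where "crd p = snd (ch p) p" for p
  define L where "L = map P [0..<m] @ map Pb [0..<m-1] @ map P' [0..<n-1] @ map Pb' [0..<n]"
  define KK where "KK i j = K (ch (P i)) (ch (Pb' j)) (crd (P i)) (crd (Pb' j))" for i j
  define Mm where "Mm c w = (\<lambda>i j. K (ch (P i)) (fst (if j < m - 1 then at_pt ch (Pb j) else (c, w)))
      (crd (P i)) (snd (if j < m - 1 then at_pt ch (Pb j) else (c, w))))" for c w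
  define Nn where "Nn c w = (\<lambda>i j. K (fst (if i < n - 1 then at_pt ch (P' i) else (c, w))) (ch (Pb' j))
      (snd (if i < n - 1 then at_pt ch (P' i) else (c, w))) (crd (Pb' j)))" for c w
  define \<alpha> where "\<alpha> i = colcof m (Mm (ch (P 0)) 0) i" for i
  define \<beta> where "\<beta> j = rowcof n (Nn (ch (P 0)) 0) j" for j
  define Om where "Om c w = Omega_loc K m (\<lambda>i. at_pt ch (P i)) (\<lambda>j. if j < m - 1 then at_pt ch (Pb j) else (c, w))" for c w
  define On where "On c w = Omega_loc K n (\<lambda>i. if i < n - 1 then at_pt ch (P' i) else (c, w)) (\<lambda>j. at_pt ch (Pb' j))" for c w
  define R where "R q = fps_residue (\<lambda>w. Om (ch q) w * On (ch q) w) (crd q)" for q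
  have OmE: "Om c w = (\<Sum>i<m. K (ch (P i)) c (crd (P i)) w * \<alpha> i)" for c w
  proof -
    have "Om c w = detN m (Mm c w)" unfolding Om_def Omega_loc_def Mm_def at_pt_def crd_def by simp
    also have "\<dots> = (\<Sum>i<m. Mm c w i (m - 1) * colcof m (Mm c w) i)" by (rule detN_col[OF m])
    also have "\<dots> = (\<Sum>i<m. K (ch (P i)) c (crd (P i)) w * \<alpha> i)"
    proof (rule sum.cong[OF refl])
      fix i assume "i \<in> {..<m}"
      have "colcof m (Mm c w) i = \<alpha> i" unfolding \<alpha>_def by (rule colcof_cong) (auto simp: Mm_def)
      then show "Mm c w i (m - 1) * colcof m (Mm c w) i = K (ch (P i)) c (crd (P i)) w * \<alpha> i"
        by (simp add: Mm_def)
    qed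
    finally show ?thesis .
  qed
  have OnE: "On c w = (\<Sum>j<n. K c (ch (Pb' j)) w (crd (Pb' j)) * \<beta> j)" for c w
  proof -
    have "On c w = detN n (Nn c w)" unfolding On_def Omega_loc_def Nn_def at_pt_def crd_def by simp
    also have "\<dots> = (\<Sum>j<n. Nn c w (n - 1) j * rowcof n (Nn c w) j)" by (rule detN_row[OF n])
    also have "\<dots> = (\<Sum>j<n. K c (ch (Pb' j)) w (crd (Pb' j)) * \<beta> j)"
    proof (rule sum.cong[OF refl])
      fix j assume "j \<in> {..<n}"
      have "rowcof n (Nn c w) j = \<beta> j" unfolding \<beta>_def by (rule rowcof_cong) (auto simp: Nn_def)
      then show "Nn c w (n - 1) j * rowcof n (Nn c w) j = K c (ch (Pb' j)) w (crd (Pb' j)) * \<beta> j"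
        by (simp add: Nn_def)
    qed
    finally show ?thesis .
  qed
  have regL: "\<forall>k. regular2_at (\<lambda>w1 w2. K (ch p) (ch q) w1 w2 $ k) (crd p, crd q)"
    if "p \<in> set L" "q \<in> set L" "p \<noteq> q" for p q
  proof -
    have r: "\<forall>q\<in>set L. \<forall>q'\<in>set L. q \<noteq> q' \<longrightarrow> (\<forall>k. regular2_at (\<lambda>w1 w2. K (ch q) (ch q') w1 w2 $ k) (crd q, crd q'))"
      using reg unfolding L_def crd_def .
    show ?thesis using r[rule_format, OF that] by blast
  qed
  have diag: "\<forall>k. \<exists>W h. (crd q, crd q) \<in> W \<and> holo2 h W \<and>
        (\<forall>(w1, w2)\<in>W. w1 \<noteq> w2 \<longrightarrow> K (ch q) (ch q) w1 w2 $ k = (if k = 0 then 1 / (w1 - w2) else 0) + h w1 w2)" for q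
  proof -
    have K3: "\<forall>c\<in>A. \<forall>p\<in>fst c. \<forall>k. \<exists>W h. (snd c p, snd c p) \<in> W \<and> holo2 h W \<and>
        (\<forall>(w1, w2)\<in>W. w1 \<noteq> w2 \<longrightarrow> K c c w1 w2 $ k = (if k = 0 then 1 / (w1 - w2) else 0) + h w1 w2)"
      using kernel unfolding KP_kernel_def by (elim conjE)
    have c1: "ch q \<in> A" and c2: "q \<in> fst (ch q)" using charts by auto
    show ?thesis unfolding crd_def using K3 c1 c2 by blast
  qed
  have memP: "i < m \<Longrightarrow> P i \<in> set L" for i unfolding L_def by auto
  have memPb: "i < m - 1 \<Longrightarrow> Pb i \<in> set L" for i unfolding L_def by auto
  have memP': "i < n - 1 \<Longrightarrow> P' i \<in> set L" for i unfolding L_def by auto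
  have memPb': "i < n \<Longrightarrow> Pb' i \<in> set L" for i unfolding L_def by auto
  have dL: "distinct L" using dist unfolding L_def .
  have d1: "distinct (map P [0..<m])" and d4: "distinct (map Pb' [0..<n])"
    and s14: "set (map P [0..<m]) \<inter> set (map Pb' [0..<n]) = {}"
    and s12: "set (map P [0..<m]) \<inter> set (map Pb [0..<m-1]) = {}"
    and s13: "set (map P [0..<m]) \<inter> set (map P' [0..<n-1]) = {}"
    and s24: "set (map Pb [0..<m-1]) \<inter> set (map Pb' [0..<n]) = {}"
    and s34: "set (map P' [0..<n-1]) \<inter> set (map Pb' [0..<n]) = {}"
    using dist unfolding distinct_append set_append by blast+
  have dPP: "P i \<noteq> P i'" if "i < m" "i' < m" "i \<noteq> i'" for i i'
    using d1 that unfolding distinct_map inj_on_def by auto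
  have dBB: "Pb' i \<noteq> Pb' i'" if "i < n" "i' < n" "i \<noteq> i'" for i i'
    using d4 that unfolding distinct_map inj_on_def by auto
  have dPB: "P i \<noteq> Pb' j" if "i < m" "j < n" for i j
  proof -
    have "P i \<in> set (map P [0..<m])" "Pb' j \<in> set (map Pb' [0..<n])" using that by auto
    then show ?thesis using s14 by (metis disjoint_iff)
  qed
  have dPPb: "P i \<noteq> Pb j" "Pb' i' \<noteq> Pb j" if "i < m" "i' < n" "j < m - 1" for i i' j
  proof -
    have a: "P i \<in> set (map P [0..<m])" using that(1) by simp
    have b: "Pb' i' \<in> set (map Pb' [0..<n])" using that(2) by simp
    have c: "Pb j \<in> set (map Pb [0..<m-1])" using that(3) by simp
    show "P i \<noteq> Pb j" using a c s12 by (metis disjoint_iff)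
    show "Pb' i' \<noteq> Pb j" using b c s24 by (metis disjoint_iff)
  qed
  have dPP': "P i \<noteq> P' j" "Pb' i' \<noteq> P' j" if "i < m" "i' < n" "j < n - 1" for i i' j
  proof -
    have a: "P i \<in> set (map P [0..<m])" using that(1) by simp
    have b: "Pb' i' \<in> set (map Pb' [0..<n])" using that(2) by simp
    have c: "P' j \<in> set (map P' [0..<n-1])" using that(3) by simp
    show "P i \<noteq> P' j" using a c s13 by (metis disjoint_iff)
    show "Pb' i' \<noteq> P' j" using b c s34 by (metis disjoint_iff)
  qed
  have hhOm: "hh (Om (ch q)) (crd q)" if "q \<in> set L" "\<And>i. i < m \<Longrightarrow> P i \<noteq> q" for q
  proof -
    have "hh (\<lambda>w. \<Sum>i<m. K (ch (P i)) (ch q) (crd (P i)) w * \<alpha> i) (crd q)"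
    proof (rule hh_sum, rule hh_mult[OF _ hh_const])
      fix i assume i: "i \<in> {..<m}"
      have "\<forall>k. regular2_at (\<lambda>w1 w2. K (ch (P i)) (ch q) w1 w2 $ k) (crd (P i), crd q)"
      proof -
        have im: "i < m" using i by simp
        then have "P i \<noteq> q" using that(2) by blast
        from regL[OF memP[OF im] that(1) this] show ?thesis .
      qed
      from reg_hh2[OF this] show "hh (\<lambda>w. K (ch (P i)) (ch q) (crd (P i)) w) (crd q)" .
    qed
    moreover have eq: "Om (ch q) = (\<lambda>w. \<Sum>i<m. K (ch (P i)) (ch q) (crd (P i)) w * \<alpha> i)"
      by (rule ext) (rule OmE)
    ultimately show ?thesis by (metis eq)
  qed
  have hhOn: "hh (On (ch q)) (crd q)" if "q \<in> set L" "\<And>j. j < n \<Longrightarrow> Pb' j \<noteq> q" for q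
  proof -
    have "hh (\<lambda>w. \<Sum>j<n. K (ch q) (ch (Pb' j)) w (crd (Pb' j)) * \<beta> j) (crd q)"
    proof (rule hh_sum, rule hh_mult[OF _ hh_const])
      fix j assume j: "j \<in> {..<n}"
      have "\<forall>k. regular2_at (\<lambda>w1 w2. K (ch q) (ch (Pb' j)) w1 w2 $ k) (crd q, crd (Pb' j))"
      proof -
        have jn: "j < n" using j by simp
        then have "Pb' j \<noteq> q" using that(2) by blast
        then have "q \<noteq> Pb' j" by metis
        from regL[OF that(1) memPb'[OF jn] this] show ?thesis .
      qed
      from reg_hh1[OF this] show "hh (\<lambda>w. K (ch q) (ch (Pb' j)) w (crd (Pb' j))) (crd q)" .
    qed
    moreover have eq: "On (ch q) = (\<lambda>w. \<Sum>j<n. K (ch q) (ch (Pb' j)) w (crd (Pb' j)) * \<beta> j)"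
      by (rule ext) (rule OnE)
    ultimately show ?thesis by (metis eq)
  qed
  have R0: "R q = 0" if "q \<in> set L" "\<And>i. i < m \<Longrightarrow> P i \<noteq> q" "\<And>j. j < n \<Longrightarrow> Pb' j \<noteq> q" for q
    unfolding R_def by (rule res_pp[OF hh_pp[OF hh_mult[OF hhOm[OF that(1,2)] hhOn[OF that(1,3)]]]])
  have RP: "R (P i0) = - \<alpha> i0 * (\<Sum>j<n. KK i0 j * \<beta> j)" if i0: "i0 < m" for i0
  proof -
    let ?q = "P i0"
    have pp1: "pp (\<lambda>w. K (ch (P i)) (ch ?q) (crd (P i)) w * \<alpha> i) (crd ?q) ((if i = i0 then -1 else 0) * \<alpha> i)"
      if "i \<in> {..<m}" for i
    proof (cases "i = i0")
      case True
      show ?thesis using pp_mult_hh[OF diag_pp(1)[OF diag[of ?q]] hh_const[of "\<alpha> i"]] True by simp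
    next
      case False
      have "hh (\<lambda>w. K (ch (P i)) (ch ?q) (crd (P i)) w) (crd ?q)"
      proof -
        have im: "i < m" using that by simp
        have "P i \<noteq> P i0" using dPP[OF im i0 False] .
        from reg_hh2[OF regL[OF memP[OF im] memP[OF i0] this]] show ?thesis .
      qed
      from pp_mult_hh[OF hh_pp[OF this] hh_const[of "\<alpha> i"]] show ?thesis using False by simp
    qed
    have "pp (\<lambda>w. \<Sum>i<m. K (ch (P i)) (ch ?q) (crd (P i)) w * \<alpha> i) (crd ?q) (\<Sum>i<m. (if i = i0 then -1 else 0) * \<alpha> i)"
      by (rule pp_sum) (use pp1 in auto)
    moreover have "Om (ch ?q) = (\<lambda>w. \<Sum>i<m. K (ch (P i)) (ch ?q) (crd (P i)) w * \<alpha> i)"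
      by (rule ext) (rule OmE)
    moreover have "(\<Sum>i<m. (if i = i0 then -1 else 0) * \<alpha> i) = - \<alpha> i0"
    proof -
      have "(\<Sum>i<m. (if i = i0 then -1 else 0) * \<alpha> i) = (\<Sum>i<m. if i = i0 then - \<alpha> i else 0)"
        by (rule sum.cong) auto
      also have "\<dots> = - \<alpha> i0" using i0 by (simp add: sum.delta)
      finally show ?thesis .
    qed
    ultimately have "pp (Om (ch ?q)) (crd ?q) (- \<alpha> i0)" by simp
    moreover have nb: "\<And>j. j < n \<Longrightarrow> Pb' j \<noteq> P i0" using dPB[OF i0] by metis
    ultimately have "pp (\<lambda>w. Om (ch ?q) w * On (ch ?q) w) (crd ?q) (- \<alpha> i0 * On (ch ?q) (crd ?q))"
      using pp_mult_hh[OF _ hhOn[OF memP[OF i0] nb]] by blast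
    then have "R ?q = - \<alpha> i0 * On (ch ?q) (crd ?q)" unfolding R_def by (rule res_pp)
    also have "On (ch ?q) (crd ?q) = (\<Sum>j<n. KK i0 j * \<beta> j)" unfolding OnE KK_def ..
    finally show ?thesis .
  qed
  have RB: "R (Pb' j0) = \<beta> j0 * (\<Sum>i<m. KK i j0 * \<alpha> i)" if j0: "j0 < n" for j0
  proof -
    let ?q = "Pb' j0"
    have pp1: "pp (\<lambda>w. K (ch ?q) (ch (Pb' j)) w (crd (Pb' j)) * \<beta> j) (crd ?q) ((if j = j0 then 1 else 0) * \<beta> j)"
      if "j \<in> {..<n}" for j
    proof (cases "j = j0")
      case True
      show ?thesis using pp_mult_hh[OF diag_pp(2)[OF diag[of ?q]] hh_const[of "\<beta> j"]] True by simp
    next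
      case False
      have "hh (\<lambda>w. K (ch ?q) (ch (Pb' j)) w (crd (Pb' j))) (crd ?q)"
      proof -
        have jn: "j < n" using that by simp
        have "Pb' j0 \<noteq> Pb' j" using dBB[OF jn j0 False] by metis
        from reg_hh1[OF regL[OF memPb'[OF j0] memPb'[OF jn] this]] show ?thesis .
      qed
      from pp_mult_hh[OF hh_pp[OF this] hh_const[of "\<beta> j"]] show ?thesis using False by simp
    qed
    have "pp (\<lambda>w. \<Sum>j<n. K (ch ?q) (ch (Pb' j)) w (crd (Pb' j)) * \<beta> j) (crd ?q) (\<Sum>j<n. (if j = j0 then 1 else 0) * \<beta> j)"
      by (rule pp_sum) (use pp1 in auto)
    moreover have "On (ch ?q) = (\<lambda>w. \<Sum>j<n. K (ch ?q) (ch (Pb' j)) w (crd (Pb' j)) * \<beta> j)"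
      by (rule ext) (rule OnE)
    moreover have "(\<Sum>j<n. (if j = j0 then 1 else 0) * \<beta> j) = \<beta> j0"
    proof -
      have "(\<Sum>j<n. (if j = j0 then 1 else 0) * \<beta> j) = (\<Sum>j<n. if j = j0 then \<beta> j else 0)"
        by (rule sum.cong) auto
      also have "\<dots> = \<beta> j0" using j0 by (simp add: sum.delta)
      finally show ?thesis .
    qed
    ultimately have "pp (On (ch ?q)) (crd ?q) (\<beta> j0)" by simp
    moreover have np: "\<And>i. i < m \<Longrightarrow> P i \<noteq> Pb' j0" using dPB j0 by metis
    ultimately have "pp (\<lambda>w. On (ch ?q) w * Om (ch ?q) w) (crd ?q) (\<beta> j0 * Om (ch ?q) (crd ?q))"
      using pp_mult_hh[OF _ hhOm[OF memPb'[OF j0] np]] by blast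
    then have "pp (\<lambda>w. Om (ch ?q) w * On (ch ?q) w) (crd ?q) (\<beta> j0 * Om (ch ?q) (crd ?q))"
      by (simp add: mult.commute)
    then have "R ?q = \<beta> j0 * Om (ch ?q) (crd ?q)" unfolding R_def by (rule res_pp)
    also have "Om (ch ?q) (crd ?q) = (\<Sum>i<m. KK i j0 * \<alpha> i)" unfolding OmE KK_def ..
    finally show ?thesis .
  qed
  have "(\<Sum>q\<in>set L. R q) = sum_list (map R L)" using dL by (simp add: sum_list_distinct_conv_sum_set)
  also have "\<dots> = (\<Sum>i<m. R (P i)) + (\<Sum>j<m-1. R (Pb j)) + (\<Sum>j<n-1. R (P' j)) + (\<Sum>j<n. R (Pb' j))"
    unfolding L_def by (simp add: interv_sum_list_conv_sum_set_nat atLeast0LessThan o_def)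
  also have "(\<Sum>j<m-1. R (Pb j)) = 0"
  proof (rule sum.neutral, rule ballI)
    fix j assume "j \<in> {..<m-1}"
    then have j: "j < m - 1" by simp
    have z: "0 < n" "0 < m" using m n by auto
    show "R (Pb j) = 0"
      by (rule R0[OF memPb[OF j]]) (use dPPb(1)[OF _ z(1) j] dPPb(2)[OF z(2) _ j] in auto)
  qed
  also have "(\<Sum>j<n-1. R (P' j)) = 0"
  proof (rule sum.neutral, rule ballI)
    fix j assume "j \<in> {..<n-1}"
    then have j: "j < n - 1" by simp
    have z: "0 < n" "0 < m" using m n by auto
    show "R (P' j) = 0"
      by (rule R0[OF memP'[OF j]]) (use dPP'(1)[OF _ z(1) j] dPP'(2)[OF z(2) _ j] in auto)
  qed
  also have "(\<Sum>i<m. R (P i)) = - (\<Sum>i<m. \<Sum>j<n. \<alpha> i * KK i j * \<beta> j)"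
    by (simp add: RP sum_distrib_left sum_negf mult.assoc)
  also have "(\<Sum>j<n. R (Pb' j)) = (\<Sum>j<n. \<Sum>i<m. \<alpha> i * KK i j * \<beta> j)"
    by (simp add: RB sum_distrib_left mult_ac)
  also have "\<dots> = (\<Sum>i<m. \<Sum>j<n. \<alpha> i * KK i j * \<beta> j)" by (rule sum.swap)
  finally have "(\<Sum>q\<in>set L. R q) = 0" by simp
  then show ?thesis unfolding R_def Om_def On_def crd_def L_def .
qed

end
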